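(* For $u\in\mathcal B$ and $n\ge0$ let $R'_n[u]:=R'[u,\dots,u]$ ($n$ arguments), so $R'_0[u]=\mathrm{id}_{\mathcal B}$. Then for $n\ge1$, $R'_n[u]=\sum_{i=0}^{n-2}R'_i[u]\circ M\big(\gamma[u\,R'_{n-i-2}[u](u)]\big)+R'_{n-1}[u]\circ a^0(u)$, where $M(c)$ denotes left multiplication by $c\in\mathcal B$ and $a^0(u)$ is the map $v\mapsto\Lambda(u\otimes v)$ on $\mathcal B$.
   Context: Let $\mathcal B$ be a unital $*$-algebra with star-linear maps $\gamma:\mathcal B\to\mathcal B$ and $\Lambda:\mathcal B\otimes_{alg}\mathcal B\to\mathcal B$. The linear operators $R'[u_1,\dots,u_k]$ on $\mathcal B$ ($k\ge0$) are defined recursively: $R'[\emptyset]=\mathrm{id}_{\mathcal B}$, and $R'[u_1,\dots,u_k]=\sum_{\pi\in\mathrm{Int}(k)}w(V_1)\circ\cdots\circ w(V_m)$, where $\mathrm{Int}(k)$ is the set of interval partitions of $\{1,\dots,k\}$, $V_1,\dots,V_m$ are the blocks of $\pi$ from left to right, $w(\{i\})$ is $v\mapsto\Lambda(u_i\otimes v)$, and for a block $V=\{p,\dots,q\}$ with $q>p$, $w(V)$ is left multiplication by $\gamma\big[u_p\,R'[u_{p+1},\dots,u_{q-1}](u_q)\big]$. *)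

theory Defs
  imports Complex_Main
begin

definition star_algebra :: "(complex \<Rightarrow> 'a::ring_1 \<Rightarrow> 'a) \<Rightarrow> ('a \<Rightarrow> 'a) \<Rightarrow> bool" where
  "star_algebra sm st \<longleftrightarrow>
     (\<forall>a x y. sm a (x + y) = sm a x + sm a y) \<and>
     (\<forall>a b x. sm (a + b) x = sm a x + sm b x) \<and>
     (\<forall>a b x. sm a (sm b x) = sm (a * b) x) \<and>
     (\<forall>x. sm 1 x = x) \<and>
     (\<forall>a x y. sm a x * y = sm a (x * y)) \<and>
     (\<forall>a x y. x * sm a y = sm a (x * y)) \<and>
     (\<forall>x y. st (x + y) = st x + st y) \<and>
     (\<forall>a x. st (sm a x) = sm (cnj a) (st x)) \<and>
     (\<forall>x y. st (x * y) = st y * st x) \<and>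
     (\<forall>x. st (st x) = x)"

definition star_linear :: "(complex \<Rightarrow> 'a::ring_1 \<Rightarrow> 'a) \<Rightarrow> ('a \<Rightarrow> 'a) \<Rightarrow> ('a \<Rightarrow> 'a) \<Rightarrow> bool" where
  "star_linear sm st f \<longleftrightarrow>
     (\<forall>x y. f (x + y) = f x + f y) \<and> (\<forall>a x. f (sm a x) = sm a (f x)) \<and>
     (\<forall>x. f (st x) = st (f x))"

text \<open>Star-linear map on the algebraic tensor product B \<otimes> B, represented (by the universal
  property) as the bilinear map L with L x y = \<Lambda>(x \<otimes> y); the star on B \<otimes> B is
  (x \<otimes> y)* = x* \<otimes> y*.\<close>
definition star_bilinear :: "(complex \<Rightarrow> 'a::ring_1 \<Rightarrow> 'a) \<Rightarrow> ('a \<Rightarrow> 'a) \<Rightarrow> ('a \<Rightarrow> 'a \<Rightarrow> 'a) \<Rightarrow> bool" where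
  "star_bilinear sm st L \<longleftrightarrow>
     (\<forall>x y z. L (x + y) z = L x z + L y z) \<and> (\<forall>x y z. L x (y + z) = L x y + L x z) \<and>
     (\<forall>a x y. L (sm a x) y = sm a (L x y)) \<and> (\<forall>a x y. L x (sm a y) = sm a (L x y)) \<and>
     (\<forall>x y. L (st x) (st y) = st (L x y))"

text \<open>Interval partitions of {1..k}, encoded as compositions of k: the list of block sizes
  from left to right.\<close>
definition compositions :: "nat \<Rightarrow> nat list set" where
  "compositions k = {c. (\<forall>b\<in>set c. 0 < b) \<and> sum_list c = k}"

fun split_blocks :: "nat list \<Rightarrow> 'a list \<Rightarrow> 'a list list" where
  "split_blocks [] us = []"
| "split_blocks (b # bs) us = take b us # split_blocks bs (drop b us)"

text \<open>R' with a fuel parameter (fuel length us suffices, since inner calls are on strictly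
  shorter lists).  For a block blk = [u_p,...,u_q]: if it is a singleton, w = (v \<mapsto> \<Lambda>(u_p \<otimes> v));
  otherwise w = left multiplication by \<gamma>(u_p * R'[u_(p+1),...,u_(q-1)](u_q)).\<close>
fun Rfuel :: "('a::ring_1 \<Rightarrow> 'a) \<Rightarrow> ('a \<Rightarrow> 'a \<Rightarrow> 'a) \<Rightarrow> nat \<Rightarrow> 'a list \<Rightarrow> 'a \<Rightarrow> 'a" where
  "Rfuel \<gamma> \<Lambda> 0 us = id"
| "Rfuel \<gamma> \<Lambda> (Suc n) us =
     (if us = [] then id
      else (\<lambda>v. \<Sum>c\<in>compositions (length us).
              foldr (\<circ>)
                (map (\<lambda>blk. if length blk = 1 then (\<lambda>x. \<Lambda> (hd blk) x)
                             else (\<lambda>x. \<gamma> (hd blk * Rfuel \<gamma> \<Lambda> n (butlast (tl blk)) (last blk)) * x))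
                     (split_blocks c us)) id v))"

definition Rprime :: "('a::ring_1 \<Rightarrow> 'a) \<Rightarrow> ('a \<Rightarrow> 'a \<Rightarrow> 'a) \<Rightarrow> 'a list \<Rightarrow> 'a \<Rightarrow> 'a" where
  "Rprime \<gamma> \<Lambda> us = Rfuel \<gamma> \<Lambda> (length us) us"

definition Rn :: "('a::ring_1 \<Rightarrow> 'a) \<Rightarrow> ('a \<Rightarrow> 'a \<Rightarrow> 'a) \<Rightarrow> nat \<Rightarrow> 'a \<Rightarrow> 'a \<Rightarrow> 'a" where
  "Rn \<gamma> \<Lambda> n u = Rprime \<gamma> \<Lambda> (replicate n u)"

end

theory Submission
  imports Defs
begin

lemma split_blocks_len: "blk \<in> set (split_blocks c us) \<Longrightarrow> length blk \<le> length us"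
proof (induction c arbitrary: us)
  case Nil then show ?case by simp
next
  case (Cons b bs)
  then show ?case by (auto dest!: Cons.IH)
qed

lemma Rfuel_indep:
  "length us \<le> m \<Longrightarrow> length us \<le> m' \<Longrightarrow> Rfuel \<gamma> \<Lambda> m us = Rfuel \<gamma> \<Lambda> m' us"
proof (induction m arbitrary: m' us)
  case 0
  then show ?case by (cases m') auto
next
  case (Suc m)
  show ?case
  proof (cases m')
    case 0 then show ?thesis using Suc.prems by simp
  next
    case (Suc m'')
    show ?thesis
    proof (cases "us = []")
      case True then show ?thesis using Suc by simp
    next
      case False
      have "\<And>c blk. blk \<in> set (split_blocks c us) \<Longrightarrow>
         Rfuel \<gamma> \<Lambda> m (butlast (tl blk)) = Rfuel \<gamma> \<Lambda> m'' (butlast (tl blk))"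
      proof -
        fix c blk assume "blk \<in> set (split_blocks c us)"
        then have "length blk \<le> length us" by (rule split_blocks_len)
        then show "Rfuel \<gamma> \<Lambda> m (butlast (tl blk)) = Rfuel \<gamma> \<Lambda> m'' (butlast (tl blk))"
          using Suc.prems \<open>m' = Suc m''\<close> False
          by (intro Suc.IH) (auto simp: length_greater_0_conv[symmetric] simp del: length_greater_0_conv)
      qed
      then show ?thesis using False \<open>m' = Suc m''\<close>
        by (auto intro!: sum.cong arg_cong[where f="\<lambda>l. foldr (\<circ>) l id _"] cong: map_cong)
    qed
  qed
qed

definition W where
  "W \<gamma> \<Lambda> blk = (if length blk = 1 then (\<lambda>x. \<Lambda> (hd blk) x)
      else (\<lambda>x. \<gamma> (hd blk * Rprime \<gamma> \<Lambda> (butlast (tl blk)) (last blk)) * x))"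

lemma compositions_0: "compositions 0 = {[]}"
  unfolding compositions_def by auto (metis list.set_sel(1) less_irrefl)

lemma Rprime_eq:
  "Rprime \<gamma> \<Lambda> us = (\<lambda>v. \<Sum>c\<in>compositions (length us).
      foldr (\<circ>) (map (W \<gamma> \<Lambda>) (split_blocks c us)) id v)"
proof (cases us)
  case Nil then show ?thesis by (simp add: Rprime_def compositions_0 id_def)
next
  case (Cons x xs)
  have "\<And>c blk. blk \<in> set (split_blocks c us) \<Longrightarrow>
     Rfuel \<gamma> \<Lambda> (length xs) (butlast (tl blk)) = Rprime \<gamma> \<Lambda> (butlast (tl blk))"
  proof -
    fix c blk assume "blk \<in> set (split_blocks c us)"
    then have "length blk \<le> length us" by (rule split_blocks_len)
    then show "Rfuel \<gamma> \<Lambda> (length xs) (butlast (tl blk)) = Rprime \<gamma> \<Lambda> (butlast (tl blk))"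
      unfolding Rprime_def using Cons by (intro Rfuel_indep) auto
  qed
  then show ?thesis using Cons unfolding Rprime_def[of _ _ us]
    by (auto simp: W_def Rprime_def intro!: sum.cong arg_cong[where f="\<lambda>l. foldr (\<circ>) l id _"] cong: map_cong)
qed

lemma split_rep: "split_blocks c (replicate (sum_list c) u) = map (\<lambda>b. replicate b u) c"
  by (induction c) (auto simp: replicate_add)

lemma Rn_eq: "Rn \<gamma> \<Lambda> n u = (\<lambda>v. \<Sum>c\<in>compositions n.
    foldr (\<circ>) (map (\<lambda>b. W \<gamma> \<Lambda> (replicate b u)) c) id v)"
  unfolding Rn_def Rprime_eq[of _ _ "replicate n u"] length_replicate
proof (intro ext sum.cong refl)
  fix c v assume "c \<in> compositions n"
  then have "replicate n u = replicate (sum_list c) u" by (simp add: compositions_def)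
  then show "foldr (\<circ>) (map (W \<gamma> \<Lambda>) (split_blocks c (replicate n u))) id v =
     foldr (\<circ>) (map (\<lambda>b. W \<gamma> \<Lambda> (replicate b u)) c) id v"
    by (simp add: split_rep map_map o_def)
qed

lemma length_le_sum: "\<forall>b\<in>set c. 0 < (b::nat) \<Longrightarrow> length c \<le> sum_list c"
  by (induction c) auto

lemma elem_le_sum: "b \<in> set c \<Longrightarrow> (b::nat) \<le> sum_list c"
  by (induction c) auto

lemma finite_compositions: "finite (compositions k)"
proof -
  have "compositions k \<subseteq> {xs. set xs \<subseteq> {0..k} \<and> length xs \<le> k}"
    unfolding compositions_def using length_le_sum elem_le_sum by fastforce
  then show ?thesis by (rule finite_subset) (rule finite_lists_length_le, simp)
qed

lemma compositions_split:
  assumes "n \<ge> 1"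
  shows "compositions n = (\<lambda>(b,c'). c' @ [b]) ` Sigma {1..n} (\<lambda>b. compositions (n-b))"
proof
  show "compositions n \<subseteq> (\<lambda>(b,c'). c' @ [b]) ` Sigma {1..n} (\<lambda>b. compositions (n-b))"
  proof
    fix c assume c: "c \<in> compositions n"
    then have "c \<noteq> []" using assms by (auto simp: compositions_def)
    then have ce: "c = butlast c @ [last c]" by simp
    have "sum_list c = sum_list (butlast c) + last c"
      by (subst ce) simp
    moreover have "last c > 0" using c \<open>c \<noteq> []\<close> by (auto simp: compositions_def)
    ultimately have "(last c, butlast c) \<in> Sigma {1..n} (\<lambda>b. compositions (n-b))"
      using c by (auto simp: compositions_def dest: in_set_butlastD)
    then show "c \<in> (\<lambda>(b,c'). c' @ [b]) ` Sigma {1..n} (\<lambda>b. compositions (n-b))"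
      using ce by (auto intro!: image_eqI[where x="(last c, butlast c)"])
  qed
next
  show "(\<lambda>(b,c'). c' @ [b]) ` Sigma {1..n} (\<lambda>b. compositions (n-b)) \<subseteq> compositions n"
    by (auto simp: compositions_def)
qed

lemma foldr_comp_shift: "foldr (\<circ>) fs g v = foldr (\<circ>) fs id (g v)"
  by (induction fs arbitrary: v) auto

lemma butlast_rep: "butlast (replicate n x) = replicate (n - 1) x"
proof (cases n)
  case (Suc m)
  have "replicate n x = replicate m x @ [x]" using Suc by (simp add: replicate_append_same)
  then show ?thesis using Suc by simp
qed simp

lemma inj_snoc: "inj_on (\<lambda>(b,c'). c' @ [b]) A"
  by (auto simp: inj_on_def)

theorem lemma3p12:
  fixes sm :: "complex \<Rightarrow> 'a::ring_1 \<Rightarrow> 'a" and st :: "'a \<Rightarrow> 'a"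
    and \<gamma> :: "'a \<Rightarrow> 'a" and \<Lambda> :: "'a \<Rightarrow> 'a \<Rightarrow> 'a" and u :: 'a and n :: nat
  assumes "star_algebra sm st" and "star_linear sm st \<gamma>" and "star_bilinear sm st \<Lambda>"
    and "n \<ge> 1"
  shows "Rn \<gamma> \<Lambda> n u =
    (\<lambda>v. (\<Sum>i<n - 1. Rn \<gamma> \<Lambda> i u (\<gamma> (u * Rn \<gamma> \<Lambda> (n - i - 2) u u) * v))
         + Rn \<gamma> \<Lambda> (n - 1) u (\<Lambda> u v))"
proof
  fix v
  define w where "w b = W \<gamma> \<Lambda> (replicate b u)" for b
  define F where "F c = foldr (\<circ>) (map w c) id" for c
  have "Rn \<gamma> \<Lambda> n u v = (\<Sum>c\<in>compositions n. F c v)"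
    unfolding Rn_eq F_def w_def ..
  also have "\<dots> = (\<Sum>p\<in>Sigma {1..n} (\<lambda>b. compositions (n-b)). F (snd p @ [fst p]) v)"
    unfolding compositions_split[OF assms(4)]
    by (subst sum.reindex[OF inj_snoc]) (simp add: case_prod_beta)
  also have "\<dots> = (\<Sum>b\<in>{1..n}. \<Sum>c\<in>compositions (n-b). F c (w b v))"
  proof -
    have "(\<Sum>b\<in>{1..n}. \<Sum>c\<in>compositions (n-b). F c (w b v)) =
      (\<Sum>(b,c)\<in>Sigma {1..n} (\<lambda>b. compositions (n-b)). F c (w b v))"
      by (rule sum.Sigma) (auto simp: finite_compositions)
    then show ?thesis by (simp add: F_def case_prod_beta foldr_comp_shift[of _ "w _"])
  qed
  also have "\<dots> = (\<Sum>b\<in>{1..n}. Rn \<gamma> \<Lambda> (n-b) u (w b v))"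
    unfolding Rn_eq F_def w_def ..
  also have "\<dots> = Rn \<gamma> \<Lambda> (n-1) u (w 1 v) + (\<Sum>b\<in>{2..n}. Rn \<gamma> \<Lambda> (n-b) u (w b v))"
  proof -
    have "{1..n} = insert 1 {2..n}" using assms(4) by auto
    then show ?thesis by simp
  qed
  also have "(\<Sum>b\<in>{2..n}. Rn \<gamma> \<Lambda> (n-b) u (w b v)) =
      (\<Sum>i<n - 1. Rn \<gamma> \<Lambda> (n - (n-i)) u (w (n-i) v))"
  proof -
    have "{2..n} = (\<lambda>i. n - i) ` {..<n-1}"
    proof
      show "{2..n} \<subseteq> (\<lambda>i. n - i) ` {..<n-1}"
      proof
        fix b assume "b \<in> {2..n}"
        then show "b \<in> (\<lambda>i. n - i) ` {..<n-1}" by (intro image_eqI[where x="n-b"]) auto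
      qed
    qed auto
    moreover have "inj_on (\<lambda>i. n - i) {..<n-1}" by (auto simp: inj_on_def)
    ultimately show ?thesis by (simp add: sum.reindex)
  qed
  also have "\<dots> = (\<Sum>i<n - 1. Rn \<gamma> \<Lambda> i u (\<gamma> (u * Rn \<gamma> \<Lambda> (n - i - 2) u u) * v))"
  proof (rule sum.cong)
    fix i assume "i \<in> {..<n-1}"
    then have "n - (n-i) = i" "n - i \<noteq> 1" "n - i \<noteq> 0" "n - i - 2 = n - i - 2" by auto
    then show "Rn \<gamma> \<Lambda> (n - (n-i)) u (w (n-i) v) = Rn \<gamma> \<Lambda> i u (\<gamma> (u * Rn \<gamma> \<Lambda> (n - i - 2) u u) * v)"
      by (simp add: w_def W_def Rn_def butlast_rep hd_replicate last_replicate)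
  qed simp
  finally show "Rn \<gamma> \<Lambda> n u v = (\<Sum>i<n - 1. Rn \<gamma> \<Lambda> i u (\<gamma> (u * Rn \<gamma> \<Lambda> (n - i - 2) u u) * v))
         + Rn \<gamma> \<Lambda> (n - 1) u (\<Lambda> u v)"
    by (simp add: w_def W_def add.commute)
qed

end
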